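(* Let $k:[0,\infty)\to[0,\infty)$ be of the form $k(x)=\nu((x,\infty))$ for a finite Borel measure $\nu$ on $(0,\infty)$ with $\int_{(2,\infty)}\log x\,\nu(dx)<\infty$ and $k(0)=\nu((0,\infty))=\alpha\in(2,\infty)$, and let $\varphi(t)=\exp\big(\int_0^\infty(e^{itx}-1)\frac{k(x)}{x}dx\big)$. Then there exist a function $L:(1,\infty)\to[0,\infty)$ that is slowly varying at $\infty$ and a constant $B>0$ such that \[ \lim_{|t|\to\infty}\frac{|t|^{\alpha}|\varphi(t)|}{L(|t|)}=B. \]
   Context: A measurable function $U$ on $(1,\infty)$ (or $[0,\infty)$) with values in $[0,\infty)$ is slowly varying at $\infty$ if $\lim_{t\to\infty}U(tx)/U(t)=1$ for every $x>0$. Here $\varphi$ is the characteristic function of the stationary distribution of the Ornstein–Uhlenbeck process $dX_t=-\lambda X_tdt+dJ_{\lambda t}$ driven by a compound Poisson subordinator $J$ with Lévy measure $\nu$. *)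

theory Defs
  imports "HOL-Analysis.Analysis"
begin

definition slowly_varying_at_top :: "(real \<Rightarrow> real) \<Rightarrow> bool" where
  "slowly_varying_at_top U \<longleftrightarrow>
     set_borel_measurable borel {1<..} U \<and>
     (\<forall>t>1. 0 \<le> U t) \<and>
     (\<forall>x>0. ((\<lambda>t. U (t * x) / U t) \<longlongrightarrow> 1) at_top)"

definition tail_fun :: "real measure \<Rightarrow> real \<Rightarrow> real" where
  "tail_fun \<nu> x = measure \<nu> {x<..}"

definition ou_charfun :: "real measure \<Rightarrow> real \<Rightarrow> complex" where
  "ou_charfun \<nu> t = exp (set_lebesgue_integral lborel {0<..}
      (\<lambda>x. (exp (\<i> * complex_of_real (t * x)) - 1) * complex_of_real (tail_fun \<nu> x / x)))"

end

theory Submission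
  imports Defs "HOL-Probability.Characteristic_Functions"
begin


context
  fixes \<nu> :: "real measure"
  assumes sets_nu[measurable_cong]: "sets \<nu> = sets borel" and fin: "finite_measure \<nu>"
begin

lemma space_nu: "space \<nu> = UNIV" using sets_eq_imp_space_eq[OF sets_nu] by simp

lemma tail_emeas: "emeasure \<nu> {x<..} = ennreal (tail_fun \<nu> x)"
  unfolding tail_fun_def using fin finite_measure.emeasure_eq_measure by blast

lemma pair_lb_nu: "pair_sigma_finite lborel \<nu>"
proof -
  interpret finite_measure \<nu> by (rule fin)
  show ?thesis by (intro pair_sigma_finite.intro lborel.sigma_finite_measure_axioms sigma_finite_measure_axioms)
qed

lemma pred_lt[measurable]: "Measurable.pred (borel \<Otimes>\<^sub>M borel) (\<lambda>x::real\<times>real. snd x \<in> {fst x<..})"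
  by (simp only: greaterThan_iff) measurable

lemma TON:
  fixes g :: "real \<Rightarrow> ennreal"
  assumes g[measurable]: "g \<in> borel_measurable borel"
  shows "(\<integral>\<^sup>+x. indicator {0<..} x * g x * ennreal (tail_fun \<nu> x) \<partial>lborel)
     = (\<integral>\<^sup>+y. (\<integral>\<^sup>+x. indicator {0<..<y} x * g x \<partial>lborel) \<partial>\<nu>)"
proof -
  have "(\<integral>\<^sup>+x. indicator {0<..} x * g x * ennreal (tail_fun \<nu> x) \<partial>lborel)
     = (\<integral>\<^sup>+x. (\<integral>\<^sup>+y. indicator {0<..} x * g x * indicator {x<..} y \<partial>\<nu>) \<partial>lborel)"
  proof (rule nn_integral_cong)
    fix x
    have "ennreal (tail_fun \<nu> x) = (\<integral>\<^sup>+y. indicator {x<..} y \<partial>\<nu>)"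
      by (subst nn_integral_indicator) (auto simp: tail_emeas)
    then show "indicator {0<..} x * g x * ennreal (tail_fun \<nu> x) = (\<integral>\<^sup>+y. indicator {0<..} x * g x * indicator {x<..} y \<partial>\<nu>)"
      by (subst nn_integral_cmult) auto
  qed
  also have "\<dots> = (\<integral>\<^sup>+y. (\<integral>\<^sup>+x. indicator {0<..} x * g x * indicator {x<..} y \<partial>lborel) \<partial>\<nu>)"
  proof (rule pair_sigma_finite.Fubini'[OF pair_lb_nu, symmetric])
    show "(\<lambda>(x, y). indicator {0<..} x * g x * indicator {x<..} y) \<in> borel_measurable (lborel \<Otimes>\<^sub>M \<nu>)"
      by measurable
  qed
  also have "\<dots> = (\<integral>\<^sup>+y. (\<integral>\<^sup>+x. indicator {0<..<y} x * g x \<partial>lborel) \<partial>\<nu>)"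
    by (intro nn_integral_cong) (auto simp: indicator_def)
  finally show ?thesis .
qed

end



lemma ln_nn: assumes "1 \<le> b" shows "(\<integral>\<^sup>+x. ennreal (1/x) * indicator {1..b} x \<partial>lborel) = ennreal (ln b)"
proof -
  have "((\<lambda>x. 1/x) has_integral (ln b - ln 1)) {1..b}"
    using assms by (intro fundamental_theorem_of_calculus)
      (auto intro!: derivative_eq_intros simp: has_real_derivative_iff_has_vector_derivative[symmetric])
  then show ?thesis by (intro nn_integral_has_integral_lebesgue') auto
qed

context
  fixes \<nu> :: "real measure"
  assumes sets_nu[measurable_cong]: "sets \<nu> = sets borel" and fin: "finite_measure \<nu>"
   and logm: "set_integrable \<nu> {2<..} (\<lambda>x. ln x)"
begin

lemma FIN:
  fixes g :: "real \<Rightarrow> real"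
  assumes g[measurable]: "g \<in> borel_measurable borel"
   and b: "\<And>x. 0 < x \<Longrightarrow> 0 \<le> g x \<and> g x \<le> A \<and> g x \<le> B / x"
   and AB: "0 \<le> A" "0 \<le> B"
  shows "(\<integral>\<^sup>+x. indicator {0<..} x * ennreal (g x) * ennreal (tail_fun \<nu> x) \<partial>lborel) < \<infinity>"
proof -
  interpret finite_measure \<nu> by (rule fin)
  have "(\<integral>\<^sup>+x. indicator {0<..} x * ennreal (g x) * ennreal (tail_fun \<nu> x) \<partial>lborel)
     = (\<integral>\<^sup>+y. (\<integral>\<^sup>+x. indicator {0<..<y} x * ennreal (g x) \<partial>lborel) \<partial>\<nu>)"
    by (rule TON[OF sets_nu fin]) measurable
  also have "\<dots> \<le> (\<integral>\<^sup>+y. ennreal (A + B * ln 2) + ennreal B * ennreal (indicator {2<..} y * ln y) \<partial>\<nu>)"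
  proof (rule nn_integral_mono)
    fix y :: real
    have "(\<integral>\<^sup>+x. indicator {0<..<y} x * ennreal (g x) \<partial>lborel)
       \<le> (\<integral>\<^sup>+x. ennreal A * indicator {0..1} x + ennreal B * (ennreal (1/x) * indicator {1..max 1 y} x) \<partial>lborel)"
    proof (rule nn_integral_mono)
      fix x :: real
      show "indicator {0<..<y} x * ennreal (g x) \<le> ennreal A * indicator {0..1} x + ennreal B * (ennreal (1/x) * indicator {1..max 1 y} x)"
      proof (cases "0 < x \<and> x < y")
        case True
        note bx = b[of x]
        show ?thesis
        proof (cases "x \<le> 1")
          case True
          have "ennreal (g x) \<le> ennreal A" using bx \<open>0<x \<and> x<y\<close> by (auto intro: ennreal_leI)
          then show ?thesis using True \<open>0<x \<and> x<y\<close> by (auto simp: indicator_def intro: add_increasing2)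
        next
          case False
          then have "ennreal (g x) \<le> ennreal B * ennreal (1/x)"
            using bx \<open>0<x \<and> x<y\<close> AB by (subst ennreal_mult[symmetric]) (auto intro!: ennreal_leI)
          then show ?thesis using False \<open>0<x \<and> x<y\<close> by (auto simp: indicator_def intro: order_trans[OF _ add_increasing])
        qed
      qed auto
    qed
    also have "\<dots> = ennreal A + ennreal B * ennreal (ln (max 1 y))"
    proof -
      have 1: "(\<integral>\<^sup>+x. ennreal A * indicator {0..1::real} x \<partial>lborel) = ennreal A"
        by (subst nn_integral_cmult_indicator) auto
      have 2: "(\<integral>\<^sup>+x. ennreal B * (ennreal (1/x) * indicator {1..max 1 y} x) \<partial>lborel) = ennreal B * ennreal (ln (max 1 y))"
        by (simp only: nn_integral_cmult[of "\<lambda>x. (ennreal (1/x) * indicator {1..max 1 y} x)" lborel, simplified] ln_nn[of "max 1 y", simplified])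
      show ?thesis
        by (simp only: nn_integral_add[of "\<lambda>x. ennreal A * indicator {0..1} x" lborel "\<lambda>x. ennreal B * (ennreal (1/x) * indicator {1..max 1 y} x)", simplified] 1 2)
    qed
    also have "\<dots> \<le> ennreal (A + B * ln 2) + ennreal B * ennreal (indicator {2<..} y * ln y)"
    proof (cases "y \<le> 2")
      case True
      have "ln (max 1 y) \<le> ln 2" using True by auto
      then have "ennreal A + ennreal B * ennreal (ln (max 1 y)) \<le> ennreal (A + B * ln 2)"
        using AB by (simp add: ennreal_mult[symmetric] ennreal_plus[symmetric] mult_left_mono del: ennreal_plus)
      then show ?thesis by (rule order_trans) simp
    next
      case False
      then have "ennreal A + ennreal B * ennreal (ln (max 1 y)) = ennreal A + ennreal B * ennreal (indicator {2<..} y * ln y)"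
        by (auto simp: indicator_def max_def)
      also have "\<dots> \<le> ennreal (A + B * ln 2) + ennreal B * ennreal (indicator {2<..} y * ln y)"
        using AB by (intro add_right_mono ennreal_leI) auto
      finally show ?thesis .
    qed
    finally show "(\<integral>\<^sup>+x. indicator {0<..<y} x * ennreal (g x) \<partial>lborel) \<le> ennreal (A + B * ln 2) + ennreal B * ennreal (indicator {2<..} y * ln y)" .
  qed
  also have "\<dots> = ennreal (A + B * ln 2) * emeasure \<nu> (space \<nu>) + ennreal B * (\<integral>\<^sup>+y. ennreal (indicator {2<..} y * ln y) \<partial>\<nu>)"
    by (subst nn_integral_add) (auto simp: nn_integral_cmult)
  also have "\<dots> < \<infinity>"
  proof -
    have "(\<integral>\<^sup>+y. ennreal (norm (indicator {2<..} y *\<^sub>R ln y)) \<partial>\<nu>) < \<infinity>"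
      using logm unfolding set_integrable_def integrable_iff_bounded by auto
    moreover have "(\<integral>\<^sup>+y. ennreal (indicator {2<..} y * ln y) \<partial>\<nu>) = (\<integral>\<^sup>+y. ennreal (norm (indicator {2<..} y *\<^sub>R ln y)) \<partial>\<nu>)"
      by (intro nn_integral_cong) (auto simp: indicator_def)
    ultimately show ?thesis using emeasure_finite[of "space \<nu>"] by (simp add: ennreal_mult_less_top less_top[symmetric] ennreal_mult_eq_top_iff)
  qed
  finally show ?thesis .
qed

end



lemma iexp_bound: fixes t x :: real shows "cmod (exp (\<i> * complex_of_real (t * x)) - 1) \<le> \<bar>t * x\<bar>"
  using iexp_approx1[of "t*x" 0] by simp

lemma iexp_bound2: fixes t x :: real shows "cmod (exp (\<i> * complex_of_real (t * x)) - 1) \<le> 2"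
proof -
  have "cmod (exp (\<i> * complex_of_real (t * x)) - 1) \<le> cmod (exp (\<i> * complex_of_real (t * x))) + cmod 1"
    by (rule norm_triangle_ineq4)
  also have "\<dots> = 2" by (simp add: norm_exp_eq_Re)
  finally show ?thesis .
qed

lemma cos_bound: fixes t x :: real shows "\<bar>1 - cos (t * x)\<bar> \<le> \<bar>t * x\<bar>"
proof -
  have "\<bar>1 - cos (t * x)\<bar> = \<bar>Re (exp (\<i> * complex_of_real (t * x)) - 1)\<bar>"
    by (simp add: Re_exp)
  also have "\<dots> \<le> cmod (exp (\<i> * complex_of_real (t * x)) - 1)" by (rule abs_Re_le_cmod)
  finally show ?thesis using iexp_bound[of t x] by linarith
qed

lemma Re_f: fixes y r :: real shows "Re ((exp (\<i> * complex_of_real y) - 1) * complex_of_real r) = - ((1 - cos y) * r)"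
  by (simp add: Re_exp algebra_simps)

definition RR :: "real measure \<Rightarrow> real \<Rightarrow> real" where
  "RR \<nu> t = set_lebesgue_integral lborel {0<..} (\<lambda>x. (1 - cos (t * x)) * tail_fun \<nu> x / x)"

context
  fixes \<nu> :: "real measure"
  assumes sets_nu[measurable_cong]: "sets \<nu> = sets borel" and fin: "finite_measure \<nu>"
   and logm: "set_integrable \<nu> {2<..} (\<lambda>x. ln x)"
begin

lemma tail_meas[measurable]: "tail_fun \<nu> \<in> borel_measurable borel"
proof -
  interpret finite_measure \<nu> by (rule fin)
  have "mono (\<lambda>x. - tail_fun \<nu> x)"
    unfolding mono_def tail_fun_def
    by (auto intro!: finite_measure_mono simp: sets_nu)
  then have "(\<lambda>x. - (- tail_fun \<nu> x)) \<in> borel_measurable borel"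
    by (intro borel_measurable_uminus borel_measurable_mono)
  then show ?thesis by simp
qed

lemma tail_nonneg: "0 \<le> tail_fun \<nu> x" unfolding tail_fun_def by simp

lemma INTc: "set_integrable lborel {0<..} (\<lambda>x. (exp (\<i> * complex_of_real (t * x)) - 1) * complex_of_real (tail_fun \<nu> x / x))"
  unfolding set_integrable_def integrable_iff_bounded
proof
  show "(\<lambda>x. indicat_real {0<..} x *\<^sub>R ((exp (\<i> * complex_of_real (t * x)) - 1) * complex_of_real (tail_fun \<nu> x / x))) \<in> borel_measurable lborel"
    by measurable
  have "(\<integral>\<^sup>+x. ennreal (norm (indicat_real {0<..} x *\<^sub>R ((exp (\<i> * complex_of_real (t * x)) - 1) * complex_of_real (tail_fun \<nu> x / x)))) \<partial>lborel)
     = (\<integral>\<^sup>+x. indicator {0<..} x * ennreal (cmod (exp (\<i> * complex_of_real (t * x)) - 1) / x) * ennreal (tail_fun \<nu> x) \<partial>lborel)"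
    by (intro nn_integral_cong) (auto simp: indicator_def norm_mult norm_divide tail_nonneg ennreal_mult[symmetric])
  also have "\<dots> < \<infinity>"
  proof (rule FIN[OF sets_nu fin logm])
    show "(\<lambda>x. cmod (exp (\<i> * complex_of_real (t * x)) - 1) / x) \<in> borel_measurable borel" by measurable
    fix x :: real assume x: "0 < x"
    have "cmod (exp (\<i> * complex_of_real (t * x)) - 1) / x \<le> \<bar>t * x\<bar> / x"
      using iexp_bound[of t x] x by (simp add: divide_right_mono)
    also have "\<dots> = \<bar>t\<bar>" using x by (simp add: abs_mult)
    finally show "0 \<le> cmod (exp (\<i> * complex_of_real (t * x)) - 1) / x \<and> cmod (exp (\<i> * complex_of_real (t * x)) - 1) / x \<le> \<bar>t\<bar>
       \<and> cmod (exp (\<i> * complex_of_real (t * x)) - 1) / x \<le> 2 / x"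
      using iexp_bound2[of t x] x by (simp add: divide_right_mono)
  qed auto
  finally show "(\<integral>\<^sup>+x. ennreal (norm (indicat_real {0<..} x *\<^sub>R ((exp (\<i> * complex_of_real (t * x)) - 1) * complex_of_real (tail_fun \<nu> x / x)))) \<partial>lborel) < \<infinity>" .
qed

lemma INTr: "set_integrable lborel {0<..} (\<lambda>x. (1 - cos (t * x)) * tail_fun \<nu> x / x)"
  unfolding set_integrable_def integrable_iff_bounded
proof
  show "(\<lambda>x. indicat_real {0<..} x *\<^sub>R ((1 - cos (t * x)) * tail_fun \<nu> x / x)) \<in> borel_measurable lborel"
    by measurable
  have "(\<integral>\<^sup>+x. ennreal (norm (indicat_real {0<..} x *\<^sub>R ((1 - cos (t * x)) * tail_fun \<nu> x / x))) \<partial>lborel)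
     = (\<integral>\<^sup>+x. indicator {0<..} x * ennreal ((1 - cos (t * x)) / x) * ennreal (tail_fun \<nu> x) \<partial>lborel)"
    by (intro nn_integral_cong) (auto simp: indicator_def tail_nonneg ennreal_mult[symmetric] abs_mult)
  also have "\<dots> < \<infinity>"
  proof (rule FIN[OF sets_nu fin logm])
    show "(\<lambda>x. (1 - cos (t * x)) / x) \<in> borel_measurable borel" by measurable
    fix x :: real assume x: "0 < x"
    have "(1 - cos (t * x)) / x \<le> \<bar>t * x\<bar> / x"
      using cos_bound[of t x] x by (simp add: divide_right_mono)
    also have "\<dots> = \<bar>t\<bar>" using x by (simp add: abs_mult)
    finally show "0 \<le> (1 - cos (t * x)) / x \<and> (1 - cos (t * x)) / x \<le> \<bar>t\<bar> \<and> (1 - cos (t * x)) / x \<le> 2 / x"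
      using x cos_le_one[of "t*x"] cos_ge_minus_one[of "t*x"] by (simp add: divide_right_mono)
  qed auto
  finally show "(\<integral>\<^sup>+x. ennreal (norm (indicat_real {0<..} x *\<^sub>R ((1 - cos (t * x)) * tail_fun \<nu> x / x))) \<partial>lborel) < \<infinity>" .
qed

lemma cmod_phi: "cmod (ou_charfun \<nu> t) = exp (- RR \<nu> t)"
proof -
  let ?f = "\<lambda>x. (exp (\<i> * complex_of_real (t * x)) - 1) * complex_of_real (tail_fun \<nu> x / x)"
  have "Re (set_lebesgue_integral lborel {0<..} ?f) = set_lebesgue_integral lborel {0<..} (\<lambda>x. Re (?f x))"
    using INTc[of t] unfolding set_integrable_def set_lebesgue_integral_def
    by (subst integral_Re[symmetric]) (auto intro!: Bochner_Integration.integral_cong simp: indicator_def)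
  also have "\<dots> = set_lebesgue_integral lborel {0<..} (\<lambda>x. - ((1 - cos (t * x)) * tail_fun \<nu> x / x))"
    unfolding set_lebesgue_integral_def
    by (intro Bochner_Integration.integral_cong refl) (subst Re_f, simp add: indicator_def field_simps)
  also have "\<dots> = - RR \<nu> t"
    unfolding RR_def set_lebesgue_integral_def by simp
  finally show ?thesis unfolding ou_charfun_def by (simp add: norm_exp_eq_Re)
qed

lemma RR_nn: "ennreal (RR \<nu> t) = (\<integral>\<^sup>+x. indicator {0<..} x * ennreal ((1 - cos (t * x)) / x) * ennreal (tail_fun \<nu> x) \<partial>lborel)"
proof -
  have "(\<integral>\<^sup>+x. ennreal (indicat_real {0<..} x *\<^sub>R ((1 - cos (t * x)) * tail_fun \<nu> x / x)) \<partial>lborel) = ennreal (RR \<nu> t)"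
    unfolding RR_def set_lebesgue_integral_def
    using INTr[of t] unfolding set_integrable_def
    by (intro nn_integral_eq_integral) (auto simp: tail_nonneg indicator_def intro!: AE_I2 divide_nonneg_nonneg mult_nonneg_nonneg)
  moreover have "(\<integral>\<^sup>+x. ennreal (indicat_real {0<..} x *\<^sub>R ((1 - cos (t * x)) * tail_fun \<nu> x / x)) \<partial>lborel)
     = (\<integral>\<^sup>+x. indicator {0<..} x * ennreal ((1 - cos (t * x)) / x) * ennreal (tail_fun \<nu> x) \<partial>lborel)"
    by (intro nn_integral_cong) (auto simp: indicator_def tail_nonneg ennreal_mult[symmetric])
  ultimately show ?thesis by simp
qed

lemma RR_nonneg: "0 \<le> RR \<nu> t"
  unfolding RR_def set_lebesgue_integral_def
  by (intro integral_nonneg_AE) (auto simp: tail_nonneg indicator_def)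

end



definition GG :: "real \<Rightarrow> real \<Rightarrow> real" where
  "GG c z = integral {1..c} (\<lambda>v. (1 - cos (z * v)) / v)"

lemma int_inv: fixes c :: real assumes "1 \<le> c" shows "((\<lambda>v. 1/v) has_integral ln c) {1..c}"
proof -
  have "((\<lambda>x. 1/x) has_integral (ln c - ln 1)) {1..c}"
    using assms by (intro fundamental_theorem_of_calculus[of 1 c ln "\<lambda>x. 1/x"])
      (auto intro!: derivative_eq_intros simp: has_real_derivative_iff_has_vector_derivative[symmetric])
  then show ?thesis by simp
qed

lemma G_has: fixes c z :: real assumes "1 \<le> c" shows "((\<lambda>v. (1 - cos (z * v)) / v) has_integral GG c z) {1..c}"
proof -
  have "continuous_on {1..c} (\<lambda>v. (1 - cos (z * v)) / v)"
    by (intro continuous_intros) auto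
  then show ?thesis unfolding GG_def
    using integrable_continuous_interval has_integral_integral by blast
qed

lemma G_bounds: fixes c z :: real assumes "1 \<le> c" shows "0 \<le> GG c z" "GG c z \<le> 2 * ln c"
proof -
  have "((\<lambda>v. 0) has_integral 0) {1..c}" by simp
  then show "0 \<le> GG c z"
    by (rule has_integral_le[OF _ G_has[OF assms]]) (auto intro!: divide_nonneg_nonneg)
  have "((\<lambda>v. 2 * (1/v)) has_integral (2 * ln c)) {1..c}"
    by (intro has_integral_mult_right int_inv assms)
  then show "GG c z \<le> 2 * ln c"
  proof (rule has_integral_le[OF G_has[OF assms]])
    fix v assume "v \<in> {1..c}"
    then show "(1 - cos (z * v)) / v \<le> 2 * (1 / v)"
      by (auto simp: divide_right_mono)
  qed
qed

lemma G_est: fixes c z :: real assumes c: "1 < c" and z: "0 < z" shows "\<bar>GG c z - ln c\<bar> \<le> (c + 1) / z"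
proof -
  let ?F = "\<lambda>v. sin (z * v) / (z * v)"
  let ?d = "\<lambda>v. cos (z * v) / v - sin (z * v) / (z * v^2)"
  let ?s = "\<lambda>v. sin (z * v) / (z * v^2)"
  have hF: "(?d has_integral (?F c - ?F 1)) {1..c}"
  proof (rule fundamental_theorem_of_calculus)
    fix v assume v: "v \<in> {1..c}"
    then have "v \<noteq> 0" by auto
    have "(?F has_real_derivative ?d v) (at v within {1..c})"
      using v z by (auto intro!: derivative_eq_intros simp: field_simps power2_eq_square)
    then show "(?F has_vector_derivative ?d v) (at v within {1..c})"
      by (simp add: has_real_derivative_iff_has_vector_derivative)
  qed (use c in auto)
  have cs: "continuous_on {1..c} ?s" by (intro continuous_intros) (use z in auto)
  have hs: "(?s has_integral integral {1..c} ?s) {1..c}"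
    using cs integrable_continuous_interval has_integral_integral by blast
  have bs: "norm (integral {1..c} ?s) \<le> (1/z) * (c - 1)"
  proof (rule integral_bound)
    fix v assume v: "v \<in> {1..c}"
    have "\<bar>sin (z * v)\<bar> \<le> 1" by simp
    moreover have "0 < z * v^2" using v z by auto
    ultimately have "\<bar>sin (z * v)\<bar> / (z * v^2) \<le> 1 / (z * v^2)"
      by (intro divide_right_mono) auto
    also have "\<dots> \<le> 1 / z" using v z
      by (intro divide_left_mono) (auto simp: one_le_power)
    finally show "norm (?s v) \<le> 1 / z" using v z by (simp add: abs_divide abs_mult)
  qed (use c cs in auto)
  have "((\<lambda>v. 1/v - ?d v - ?s v) has_integral (ln c - (?F c - ?F 1) - integral {1..c} ?s)) {1..c}"
    by (intro has_integral_diff int_inv hF hs) (use c in auto)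
  moreover have "(\<lambda>v. 1/v - ?d v - ?s v) = (\<lambda>v. (1 - cos (z * v)) / v)"
    by (rule ext) (simp add: diff_divide_distrib)
  ultimately have h: "((\<lambda>v. (1 - cos (z * v)) / v) has_integral (ln c - (?F c - ?F 1) - integral {1..c} ?s)) {1..c}"
    by simp
  have eq: "GG c z = ln c - (?F c - ?F 1) - integral {1..c} ?s"
    by (rule has_integral_unique[OF G_has h]) (use c in simp)
  have b1: "\<bar>?F c\<bar> \<le> 1 / z"
  proof -
    have "\<bar>?F c\<bar> = \<bar>sin (z*c)\<bar> / (z * c)" using c z by (simp add: abs_divide abs_mult)
    also have "\<dots> \<le> 1 / (z * c)" using c z by (intro divide_right_mono) auto
    also have "\<dots> \<le> 1 / z" using c z by (intro divide_left_mono) auto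
    finally show ?thesis .
  qed
  have b2: "\<bar>?F 1\<bar> \<le> 1 / z"
    using z by (simp add: abs_divide abs_mult divide_right_mono)
  define A where "A = ?F c"
  define B where "B = ?F 1"
  define I where "I = integral {1..c} ?s"
  have "GG c z - ln c = - (A - B) - I" unfolding A_def B_def I_def eq by simp
  moreover have "\<bar>A\<bar> \<le> 1/z" "\<bar>B\<bar> \<le> 1/z" "\<bar>I\<bar> \<le> (c - 1) / z"
    using b1 b2 bs unfolding A_def B_def I_def by auto
  moreover have "(c + 1) / z = 1/z + 1/z + (c - 1)/z" using z by (simp add: field_simps)
  ultimately show ?thesis by linarith
qed

lemma G_lim: fixes c :: real assumes c: "1 < c" shows "((\<lambda>z. GG c z) \<longlongrightarrow> ln c) at_top"
proof -
  have "((\<lambda>z. GG c z - ln c) \<longlongrightarrow> 0) at_top"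
  proof (rule Lim_null_comparison)
    show "\<forall>\<^sub>F z in at_top. norm (GG c z - ln c) \<le> (c + 1) / z"
      using eventually_gt_at_top[of 0] by eventually_elim (use G_est c in auto)
    show "((\<lambda>z. (c + 1) / z) \<longlongrightarrow> 0) at_top"
      by (intro tendsto_divide_0[OF tendsto_const] filterlim_at_top_imp_at_infinity[OF filterlim_ident])
  qed
  then show ?thesis by (simp add: LIM_zero_iff)
qed




lemma SCALE:
  fixes a b :: real and S :: "real set"
  assumes a: "0 < a" and S[measurable]: "S \<in> sets borel"
  shows "(\<integral>\<^sup>+x. indicator S x * ennreal ((1 - cos (b * x)) / x) \<partial>lborel)
       = (\<integral>\<^sup>+v. indicator S (a * v) * ennreal ((1 - cos (b * a * v)) / v) \<partial>lborel)"
proof -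
  have "(\<integral>\<^sup>+x. indicator S x * ennreal ((1 - cos (b * x)) / x) \<partial>lborel)
      = ennreal \<bar>a\<bar> * (\<integral>\<^sup>+v. indicator S (0 + a * v) * ennreal ((1 - cos (b * (0 + a * v))) / (0 + a * v)) \<partial>lborel)"
    by (rule nn_integral_real_affine) (use a in auto)
  also have "\<dots> = (\<integral>\<^sup>+v. ennreal a * (indicator S (a * v) * ennreal ((1 - cos (b * (a * v))) / (a * v))) \<partial>lborel)"
    using a by (subst nn_integral_cmult) auto
  also have "\<dots> = (\<integral>\<^sup>+v. indicator S (a * v) * ennreal ((1 - cos (b * a * v)) / v) \<partial>lborel)"
  proof (rule nn_integral_cong)
    fix v :: real
    have "ennreal a * ennreal ((1 - cos (b * (a * v))) / (a * v)) = ennreal (a * ((1 - cos (b * (a * v))) / (a * v)))"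
      by (rule ennreal_mult'[symmetric]) (use a in simp)
    also have "a * ((1 - cos (b * (a * v))) / (a * v)) = (1 - cos (b * a * v)) / v"
      using a by (cases "v = 0") (auto simp: field_simps mult.assoc)
    finally show "ennreal a * (indicator S (a * v) * ennreal ((1 - cos (b * (a * v))) / (a * v))) = indicator S (a * v) * ennreal ((1 - cos (b * a * v)) / v)"
      by (metis (no_types) mult.left_commute)
  qed
  finally show ?thesis .
qed

definition Jn :: "real \<Rightarrow> real \<Rightarrow> ennreal" where
  "Jn t y = (\<integral>\<^sup>+x. indicator {0<..<y} x * ennreal ((1 - cos (t * x)) / x) \<partial>lborel)"

lemma Gn: assumes c: "1 \<le> c"
  shows "(\<integral>\<^sup>+v. indicator {1..<c} v * ennreal ((1 - cos (z * v)) / v) \<partial>lborel) = ennreal (GG c z)"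
proof -
  have "(\<integral>\<^sup>+v. indicator {1..<c} v * ennreal ((1 - cos (z * v)) / v) \<partial>lborel)
     = (\<integral>\<^sup>+v. ennreal ((1 - cos (z * v)) / v) * indicator {1..c} v \<partial>lborel)"
    using AE_lborel_singleton[of c] by (intro nn_integral_cong_AE) (auto simp: indicator_def)
  also have "\<dots> = ennreal (GG c z)"
    by (rule nn_integral_has_integral_lebesgue'[OF _ G_has[OF c]]) (auto intro!: divide_nonneg_nonneg)
  finally show ?thesis .
qed

lemma JSPLIT:
  assumes c: "1 < c" and y: "0 < y"
  shows "Jn (c * t) y = Jn t y + ennreal (GG c (t * y))"
proof -
  have "(\<integral>\<^sup>+x. indicator {0<..<c*y} x * ennreal ((1 - cos (t * x)) / x) \<partial>lborel)
     = (\<integral>\<^sup>+v. indicator {0<..<c*y} (c * v) * ennreal ((1 - cos (t * c * v)) / v) \<partial>lborel)"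
    by (rule SCALE) (use c in auto)
  also have "\<dots> = Jn (c * t) y"
    unfolding Jn_def using c y by (intro nn_integral_cong) (auto simp: indicator_def mult.commute mult.left_commute zero_less_mult_iff)
  finally have 1: "Jn (c * t) y = (\<integral>\<^sup>+x. indicator {0<..<c*y} x * ennreal ((1 - cos (t * x)) / x) \<partial>lborel)" ..
  have "(\<integral>\<^sup>+x. indicator {0<..<c*y} x * ennreal ((1 - cos (t * x)) / x) \<partial>lborel)
     = (\<integral>\<^sup>+x. indicator {0<..<y} x * ennreal ((1 - cos (t * x)) / x) + indicator {y..<c*y} x * ennreal ((1 - cos (t * x)) / x) \<partial>lborel)"
  proof (rule nn_integral_cong)
    fix x :: real
    have "y < c * y" using c y by simp
    then have "x < y \<Longrightarrow> x < c * y" by linarith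
    then show "indicator {0<..<c*y} x * ennreal ((1 - cos (t * x)) / x) = indicator {0<..<y} x * ennreal ((1 - cos (t * x)) / x) + indicator {y..<c*y} x * ennreal ((1 - cos (t * x)) / x)"
      using y by (auto simp: indicator_def)
  qed
  also have "\<dots> = Jn t y + (\<integral>\<^sup>+x. indicator {y..<c*y} x * ennreal ((1 - cos (t * x)) / x) \<partial>lborel)"
    unfolding Jn_def by (rule nn_integral_add) auto
  also have "(\<integral>\<^sup>+x. indicator {y..<c*y} x * ennreal ((1 - cos (t * x)) / x) \<partial>lborel)
     = (\<integral>\<^sup>+v. indicator {y..<c*y} (y * v) * ennreal ((1 - cos (t * y * v)) / v) \<partial>lborel)"
    by (rule SCALE) (use y in auto)
  also have "\<dots> = (\<integral>\<^sup>+v. indicator {1..<c} v * ennreal ((1 - cos ((t * y) * v)) / v) \<partial>lborel)"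
    using y by (intro nn_integral_cong) (auto simp: indicator_def)
  also have "\<dots> = ennreal (GG c (t * y))"
    by (rule Gn) (use c in auto)
  finally show ?thesis using 1 by simp
qed




lemma pred_in_ioo[measurable]: "Measurable.pred (borel \<Otimes>\<^sub>M borel) (\<lambda>p::real\<times>real. snd p \<in> {0<..<fst p})"
  by (simp only: greaterThanLessThan_iff) measurable

context
  fixes \<nu> :: "real measure"
  assumes sets_nu[measurable_cong]: "sets \<nu> = sets borel" and fin: "finite_measure \<nu>"
   and logm: "set_integrable \<nu> {2<..} (\<lambda>x. ln x)"
   and null0: "emeasure \<nu> {..0} = 0"
begin

lemma Jn_meas[measurable]: "(\<lambda>y. Jn t y) \<in> borel_measurable \<nu>"
  unfolding Jn_def by measurable

lemma GGn: assumes "1 \<le> c" shows "GG c (t * y) = enn2real (\<integral>\<^sup>+v. indicator {1..<c} v * ennreal ((1 - cos (t * y * v)) / v) \<partial>lborel)"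
  using Gn[OF assms, of "t*y"] G_bounds[OF assms] by simp

lemma GG_meas: assumes "1 \<le> c" shows "(\<lambda>y. GG c (t * y)) \<in> borel_measurable \<nu>"
  by (subst GGn[OF assms]) measurable

lemma RR_J: "ennreal (RR \<nu> t) = (\<integral>\<^sup>+y. Jn t y \<partial>\<nu>)"
  unfolding RR_nn[OF sets_nu fin logm] Jn_def
  by (rule TON[OF sets_nu fin]) measurable

lemma AE_pos: "AE y in \<nu>. 0 < y"
proof (rule AE_I')
  show "{..0} \<in> null_sets \<nu>" using null0 sets_nu by (auto simp: null_sets_def)
qed (auto simp: space_nu[OF sets_nu])

lemma RR_split: assumes c: "1 < c"
  shows "RR \<nu> (c * t) = RR \<nu> t + integral\<^sup>L \<nu> (\<lambda>y. GG c (t * y))"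
proof -
  interpret finite_measure \<nu> by (rule fin)
  have int: "integrable \<nu> (\<lambda>y. GG c (t * y))"
    by (rule integrable_const_bound[where B="2 * ln c"]) 
       (use G_bounds c GG_meas in auto)
  have "ennreal (RR \<nu> (c * t)) = (\<integral>\<^sup>+y. Jn t y + ennreal (GG c (t * y)) \<partial>\<nu>)"
  proof -
    have "AE y in \<nu>. Jn (c * t) y = Jn t y + ennreal (GG c (t * y))"
      using AE_pos by eventually_elim (rule JSPLIT[OF c])
    then show ?thesis unfolding RR_J by (rule nn_integral_cong_AE)
  qed
  also have "\<dots> = ennreal (RR \<nu> t) + (\<integral>\<^sup>+y. ennreal (GG c (t * y)) \<partial>\<nu>)"
    unfolding RR_J by (rule nn_integral_add) (use GG_meas c in auto)
  also have "(\<integral>\<^sup>+y. ennreal (GG c (t * y)) \<partial>\<nu>) = ennreal (integral\<^sup>L \<nu> (\<lambda>y. GG c (t * y)))"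
    by (rule nn_integral_eq_integral[OF int]) (use G_bounds c in auto)
  finally have "ennreal (RR \<nu> (c * t)) = ennreal (RR \<nu> t + integral\<^sup>L \<nu> (\<lambda>y. GG c (t * y)))"
    by (subst ennreal_plus) (auto intro!: RR_nonneg[OF sets_nu fin logm] integral_nonneg_AE simp: G_bounds c less_imp_le)
  then show ?thesis
    by (subst (asm) ennreal_inj) (auto intro!: RR_nonneg[OF sets_nu fin logm] add_nonneg_nonneg integral_nonneg_AE simp: G_bounds c less_imp_le)
qed

lemma LIM1: assumes c: "1 < c"
  shows "((\<lambda>t. RR \<nu> (c * t) - RR \<nu> t) \<longlongrightarrow> ln c * measure \<nu> (space \<nu>)) at_top"
proof -
  interpret finite_measure \<nu> by (rule fin)
  have "((\<lambda>t. integral\<^sup>L \<nu> (\<lambda>y. GG c (t * y))) \<longlongrightarrow> integral\<^sup>L \<nu> (\<lambda>y. ln c)) at_top"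
  proof (rule integral_dominated_convergence_at_top[where w="\<lambda>y. 2 * ln c"])
    show "AE y in \<nu>. ((\<lambda>t. GG c (t * y)) \<longlongrightarrow> ln c) at_top"
      using AE_pos
    proof eventually_elim
      fix y :: real assume y: "0 < y"
      have "filterlim (\<lambda>t. t * y) at_top at_top"
        using filterlim_tendsto_pos_mult_at_top[OF tendsto_const y filterlim_ident]
        by (simp add: mult.commute)
      then show "((\<lambda>t. GG c (t * y)) \<longlongrightarrow> ln c) at_top"
        by (rule filterlim_compose[OF G_lim[OF c]])
    qed
    show "\<forall>\<^sub>F t in at_top. AE y in \<nu>. norm (GG c (t * y)) \<le> 2 * ln c"
      using G_bounds c by auto
  qed (use GG_meas c in auto)
  moreover have "\<forall>t. RR \<nu> (c * t) - RR \<nu> t = integral\<^sup>L \<nu> (\<lambda>y. GG c (t * y))"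
    using RR_split[OF c] by simp
  ultimately show ?thesis by (simp add: mult.commute)
qed

end



context
  fixes \<nu> :: "real measure"
  assumes sets_nu[measurable_cong]: "sets \<nu> = sets borel" and fin: "finite_measure \<nu>"
   and logm: "set_integrable \<nu> {2<..} (\<lambda>x. ln x)"
   and null0: "emeasure \<nu> {..0} = 0"
begin

lemma LIM2: assumes x: "0 < x"
  shows "((\<lambda>t. RR \<nu> (t * x) - RR \<nu> t) \<longlongrightarrow> ln x * measure \<nu> (space \<nu>)) at_top"
proof (cases "1 < x")
  case True
  then show ?thesis using LIM1[OF sets_nu fin logm null0 True] by (simp add: mult.commute)
next
  case False
  show ?thesis
  proof (cases "x = 1")
    case True
    then show ?thesis by simp
  next
    case False
    with \<open>\<not> 1 < x\<close> x have c: "1 < 1 / x" by (simp add: field_simps)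
    have f: "filterlim (\<lambda>t. t * x) at_top at_top"
      using filterlim_tendsto_pos_mult_at_top[OF tendsto_const x filterlim_ident]
      by (simp add: mult.commute)
    have "((\<lambda>t. RR \<nu> (1 / x * (t * x)) - RR \<nu> (t * x)) \<longlongrightarrow> ln (1 / x) * measure \<nu> (space \<nu>)) at_top"
      using filterlim_compose[OF LIM1[OF sets_nu fin logm null0 c] f] by simp
    moreover have "\<And>t. 1 / x * (t * x) = t" using x by simp
    ultimately have "((\<lambda>t. RR \<nu> t - RR \<nu> (t * x)) \<longlongrightarrow> ln (1 / x) * measure \<nu> (space \<nu>)) at_top"
      by simp
    then have "((\<lambda>t. - (RR \<nu> t - RR \<nu> (t * x))) \<longlongrightarrow> - (ln (1 / x) * measure \<nu> (space \<nu>))) at_top"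
      by (rule tendsto_minus)
    then show ?thesis using x by (simp add: ln_div)
  qed
qed

lemma RR_meas: "RR \<nu> \<in> borel_measurable borel"
proof -
  have [measurable]: "tail_fun \<nu> \<in> borel_measurable borel" by (rule tail_meas[OF sets_nu fin logm])
  show ?thesis unfolding RR_def[abs_def] set_lebesgue_integral_def by measurable
qed

lemma RR_even: "RR \<nu> (- t) = RR \<nu> t"
  unfolding RR_def by simp

end

theorem mainTheorem6:
  fixes \<nu> :: "real measure" and \<alpha> :: real
  assumes "sets \<nu> = sets borel"
    and "finite_measure \<nu>"
    and "emeasure \<nu> {..0} = 0"
    and "set_integrable \<nu> {2<..} (\<lambda>x. ln x)"
    and "\<alpha> = measure \<nu> {0<..}"
    and "2 < \<alpha>"
  shows "\<exists>L B. slowly_varying_at_top L \<and> 0 < B \<and>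
           ((\<lambda>t. \<bar>t\<bar> powr \<alpha> * cmod (ou_charfun \<nu> t) / L \<bar>t\<bar>) \<longlongrightarrow> B) at_infinity"
proof -
  note sn = assms(1) and fin = assms(2) and null0 = assms(3) and logm = assms(4)
  define L where "L s = s powr \<alpha> * exp (- RR \<nu> s)" for s
  have M: "measure \<nu> (space \<nu>) = \<alpha>"
  proof -
    have "space \<nu> = {0<..} \<union> {..0}" using space_nu[OF sn fin] by auto
    moreover have "{..0} \<in> null_sets \<nu>" using null0 sn by (auto simp: null_sets_def)
    ultimately show ?thesis using assms(5) sn by (simp add: measure_Un_null_set)
  qed
  have sv: "slowly_varying_at_top L"
    unfolding slowly_varying_at_top_def
  proof (intro conjI allI impI)
    have [measurable]: "RR \<nu> \<in> borel_measurable borel" by (rule RR_meas[OF sn fin logm null0])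
    show "set_borel_measurable borel {1<..} L"
      unfolding set_borel_measurable_def L_def[abs_def] by measurable
    fix t :: real assume "1 < t" then show "0 \<le> L t" unfolding L_def by simp
  next
    fix x :: real assume x: "0 < x"
    have "((\<lambda>t. x powr \<alpha> * exp (- (RR \<nu> (t * x) - RR \<nu> t))) \<longlongrightarrow> x powr \<alpha> * exp (- (ln x * \<alpha>))) at_top"
      using LIM2[OF sn fin logm null0 x] M by (intro tendsto_intros) auto
    moreover have "x powr \<alpha> * exp (- (ln x * \<alpha>)) = 1"
      using x by (simp add: powr_def exp_minus field_simps mult.commute)
    moreover have "\<forall>\<^sub>F t in at_top. x powr \<alpha> * exp (- (RR \<nu> (t * x) - RR \<nu> t)) = L (t * x) / L t"
      using eventually_gt_at_top[of 0]
    proof eventually_elim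
      fix t :: real assume t: "0 < t"
      have "L (t * x) / L t = (t powr \<alpha> * x powr \<alpha> * exp (- RR \<nu> (t * x))) / (t powr \<alpha> * exp (- RR \<nu> t))"
        unfolding L_def using t x by (simp add: powr_mult)
      also have "\<dots> = x powr \<alpha> * (exp (- RR \<nu> (t * x)) / exp (- RR \<nu> t))"
        using t by (simp add: field_simps)
      also have "exp (- RR \<nu> (t * x)) / exp (- RR \<nu> t) = exp (- (RR \<nu> (t * x) - RR \<nu> t))"
        by (simp add: exp_diff[symmetric])
      finally show "x powr \<alpha> * exp (- (RR \<nu> (t * x) - RR \<nu> t)) = L (t * x) / L t" by simp
    qed
    ultimately show "((\<lambda>t. L (t * x) / L t) \<longlongrightarrow> 1) at_top"
      using tendsto_cong by force
  qed
  have "((\<lambda>t. \<bar>t\<bar> powr \<alpha> * cmod (ou_charfun \<nu> t) / L \<bar>t\<bar>) \<longlongrightarrow> 1) at_infinity"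
  proof -
    have "\<forall>\<^sub>F t in at_infinity. \<bar>t\<bar> powr \<alpha> * cmod (ou_charfun \<nu> t) / L \<bar>t\<bar> = 1"
      unfolding eventually_at_infinity
    proof (intro exI[of _ 1] allI impI)
      fix t :: real assume "1 \<le> norm t"
      then have t: "0 < \<bar>t\<bar>" by simp
      have "RR \<nu> \<bar>t\<bar> = RR \<nu> t"
        by (cases "0 \<le> t") (auto simp: RR_def)
      then show "\<bar>t\<bar> powr \<alpha> * cmod (ou_charfun \<nu> t) / L \<bar>t\<bar> = 1"
        unfolding L_def cmod_phi[OF sn fin logm] using t by simp
    qed
    then show ?thesis by (rule tendsto_eventually)
  qed
  then show ?thesis using sv by (intro exI[of _ L] exI[of _ "1::real"]) auto
qed


end
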